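(* Let $\sigma$ be a permutation of $[n]$. Then every interval of integers of length $\sqrt{32\,n\,D(\sigma)}$ contained in $[n]$ contains an element of $A_\sigma$.
   Context: $[n]=\{1,\dots,n\}$, identified with $\mathbb{Z}_n$. For $k\in[n]$, $B_\sigma(k)=|\{1\le q\le k:\sigma(q)\le\sigma(k)\}|$ and $A_\sigma=\{B_\sigma(k):k\in[n]\}$. An interval of $\mathbb{Z}_n$ is any subset that is the image of an interval of consecutive integers under the projection $\mathbb{Z}\to\mathbb{Z}_n$ (wrap-around allowed). For $S,T\subseteq\mathbb{Z}_n$, $D_T(S)=\bigl|\,|S\cap T|-|S||T|/n\,\bigr|$, and $D(\sigma)=\max_{I,J}D_J(\sigma(I))$ over all intervals $I,J$ of $\mathbb{Z}_n$. *)

theory Defs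
  imports Complex_Main "HOL-Combinatorics.Permutations"
begin

(* [n] = {1..n} identified with Z_n via k \<mapsto> k mod n; the projection Z \<rightarrow> [n] *)
definition proj_n :: "nat \<Rightarrow> int \<Rightarrow> nat" where
  "proj_n n x = nat ((x - 1) mod int n) + 1"

(* intervals of Z_n (as subsets of [n]): images of runs of consecutive integers, wrap-around allowed *)
definition zn_intervals :: "nat \<Rightarrow> nat set set" where
  "zn_intervals n = {proj_n n ` {a..<a + int m} | a m. True}"

definition Bsig :: "(nat \<Rightarrow> nat) \<Rightarrow> nat \<Rightarrow> nat" where
  "Bsig \<sigma> k = card {q. 1 \<le> q \<and> q \<le> k \<and> \<sigma> q \<le> \<sigma> k}"

definition Asig :: "nat \<Rightarrow> (nat \<Rightarrow> nat) \<Rightarrow> nat set" where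
  "Asig n \<sigma> = Bsig \<sigma> ` {1..n}"

definition discr :: "nat \<Rightarrow> nat set \<Rightarrow> nat set \<Rightarrow> real" where
  "discr n T S = \<bar>real (card (S \<inter> T)) - real (card S) * real (card T) / real n\<bar>"

definition Dsig :: "nat \<Rightarrow> (nat \<Rightarrow> nat) \<Rightarrow> real" where
  "Dsig n \<sigma> = Max {discr n J (\<sigma> ` I) | I J. I \<in> zn_intervals n \<and> J \<in> zn_intervals n}"

end

theory Submission imports Defs begin

definition fc :: "(nat \<Rightarrow> nat) \<Rightarrow> nat \<Rightarrow> nat \<Rightarrow> nat" where
  "fc \<sigma> k v = card {q \<in> {1..k}. \<sigma> q \<le> v}"

lemma bsig_fc: "Bsig \<sigma> k = fc \<sigma> k (\<sigma> k)"
  unfolding Bsig_def fc_def by (rule arg_cong[where f=card]) auto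

lemma proj_id: "1 \<le> x \<Longrightarrow> x \<le> n \<Longrightarrow> proj_n n (int x) = x"
  unfolding proj_n_def by simp

lemma prefix_interval:
  assumes "k \<le> n" shows "{1..k} \<in> zn_intervals n"
proof -
  have "{1..<1 + int k} = int ` {1..k}"
  proof (intro set_eqI iffI)
    fix x assume "x \<in> {1..<1 + int k}"
    then show "x \<in> int ` {1..k}" by (intro image_eqI[of _ _ "nat x"]) auto
  qed auto
  moreover have "(\<lambda>x. proj_n n (int x)) ` {1..k} = (\<lambda>x. x) ` {1..k}"
    by (rule image_cong) (use assms in \<open>auto simp: proj_id\<close>)
  ultimately have "proj_n n ` {1..<1 + int k} = {1..k}"
    by (simp add: image_image)
  thus ?thesis unfolding zn_intervals_def by blast
qed

lemma singleton_interval: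
  assumes "1 \<le> x" "x \<le> n" shows "{x} \<in> zn_intervals n"
proof -
  have "{int x..<int x + int 1} = {int x}" by auto
  hence "proj_n n ` {int x..<int x + int 1} = {x}" using proj_id[OF assms] by simp
  thus ?thesis unfolding zn_intervals_def by blast
qed

lemma zn_sub: "1 \<le> n \<Longrightarrow> zn_intervals n \<subseteq> Pow {1..n}"
proof -
  assume n: "1 \<le> n"
  have "proj_n n x \<in> {1..n}" for x
  proof -
    have "(x - 1) mod int n < int n" using n by simp
    moreover have "0 \<le> (x - 1) mod int n" using n by simp
    ultimately show ?thesis unfolding proj_n_def by auto
  qed
  thus ?thesis unfolding zn_intervals_def by auto
qed

lemma le_D:
  assumes n: "1 \<le> n" and I: "I \<in> zn_intervals n" and J: "J \<in> zn_intervals n"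
  shows "discr n J (\<sigma> ` I) \<le> Dsig n \<sigma>"
proof -
  have eq: "{discr n J (\<sigma> ` I) | I J. I \<in> zn_intervals n \<and> J \<in> zn_intervals n}
     = (\<lambda>(I,J). discr n J (\<sigma> ` I)) ` (zn_intervals n \<times> zn_intervals n)" by auto
  have "finite (zn_intervals n)" using zn_sub[OF n] by (meson finite_Pow_iff finite_atLeastAtMost finite_subset)
  hence fin: "finite {discr n J (\<sigma> ` I) | I J. I \<in> zn_intervals n \<and> J \<in> zn_intervals n}"
    unfolding eq by simp
  show ?thesis unfolding Dsig_def by (rule Max_ge[OF fin]) (use I J in blast)
qed

lemma count_perm:
  assumes p: "\<sigma> permutes {1..n}" and S: "S \<subseteq> {1..n}"
  shows "card {q \<in> {1..n}. \<sigma> q \<in> S} = card S"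
proof -
  have bij: "bij_betw \<sigma> {1..n} {1..n}" using p by (rule permutes_imp_bij)
  have inj: "inj_on \<sigma> {1..n}" using bij bij_betw_def by blast
  have "\<sigma> ` {q \<in> {1..n}. \<sigma> q \<in> S} = S"
  proof (intro set_eqI iffI)
    fix y assume "y \<in> S"
    then have "y \<in> \<sigma> ` {1..n}" using bij S unfolding bij_betw_def by auto
    then show "y \<in> \<sigma> ` {q \<in> {1..n}. \<sigma> q \<in> S}" using \<open>y \<in> S\<close> by auto
  qed auto
  moreover have "inj_on \<sigma> {q \<in> {1..n}. \<sigma> q \<in> S}" using inj by (rule inj_on_subset) auto
  ultimately show ?thesis using card_image by metis
qed

lemma fc_n: assumes p: "\<sigma> permutes {1..n}" and v: "v \<le> n" shows "fc \<sigma> n v = v"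
proof -
  have "{q \<in> {1..n}. \<sigma> q \<le> v} = {q \<in> {1..n}. \<sigma> q \<in> {1..v}}"
    using permutes_in_image[OF p] by auto
  thus ?thesis unfolding fc_def using count_perm[OF p, of "{1..v}"] v by simp
qed

lemma disc_fc:
  assumes p: "\<sigma> permutes {1..n}" and k: "k \<le> n" and v: "v \<le> n" and n: "1 \<le> n"
  shows "\<bar>real (fc \<sigma> k v) - real k * real v / real n\<bar> \<le> Dsig n \<sigma>"
proof -
  have inj: "inj_on \<sigma> {1..k}"
    using permutes_inj[OF p] by (meson inj_on_subset subset_UNIV)
  have c1: "card (\<sigma> ` {1..k}) = k" using card_image[OF inj] by simp
  have "\<sigma> ` {1..k} \<inter> {1..v} = \<sigma> ` {q \<in> {1..k}. \<sigma> q \<le> v}"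
  proof -
    have "\<sigma> q \<ge> 1" if "q \<in> {1..k}" for q
      using permutes_in_image[OF p, of q] that k by auto
    thus ?thesis by auto
  qed
  moreover have "card (\<sigma> ` {q \<in> {1..k}. \<sigma> q \<le> v}) = fc \<sigma> k v"
    unfolding fc_def by (rule card_image) (rule inj_on_subset[OF inj], auto)
  ultimately have c2: "card (\<sigma> ` {1..k} \<inter> {1..v}) = fc \<sigma> k v" by simp
  have "discr n {1..v} (\<sigma> ` {1..k}) \<le> Dsig n \<sigma>"
    by (rule le_D[OF n prefix_interval[OF k] prefix_interval[OF v]])
  thus ?thesis unfolding discr_def c1 c2 by simp
qed

lemma nat_floor_bounds:
  fixes x :: real assumes "0 \<le> x"
  shows "real (nat \<lfloor>x\<rfloor>) \<le> x" "x - 1 < real (nat \<lfloor>x\<rfloor>)"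
proof -
  have e: "real (nat \<lfloor>x\<rfloor>) = real_of_int \<lfloor>x\<rfloor>" using assms by simp
  have "real_of_int \<lfloor>x\<rfloor> \<le> x" "x < real_of_int \<lfloor>x\<rfloor> + 1"
    by (simp_all add: of_int_floor_le)
  thus "real (nat \<lfloor>x\<rfloor>) \<le> x" "x - 1 < real (nat \<lfloor>x\<rfloor>)" unfolding e by auto
qed

theorem mainTheorem17:
  fixes n :: nat and \<sigma> :: "nat \<Rightarrow> nat" and a b :: nat
  assumes "\<sigma> permutes {1..n}"
    and "1 \<le> a" and "a \<le> b" and "b \<le> n"
    and "real (card {a..b}) \<ge> sqrt (32 * real n * Dsig n \<sigma>)"
  shows "\<exists>x\<in>{a..b}. x \<in> Asig n \<sigma>"
proof (rule ccontr)
  note p = assms(1)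
  assume "\<not> (\<exists>x\<in>{a..b}. x \<in> Asig n \<sigma>)"
  hence noB: "\<And>k. k \<in> {1..n} \<Longrightarrow> Bsig \<sigma> k < a \<or> b < Bsig \<sigma> k"
    unfolding Asig_def by force
  have n1: "1 \<le> n" using assms by simp
  have "{q \<in> {1..1}. \<sigma> q \<le> \<sigma> 1} = {1}" by auto
  hence "Bsig \<sigma> 1 = 1" unfolding bsig_fc fc_def by simp
  hence a2: "2 \<le> a" using noB[of 1] n1 assms(2,3) by fastforce
  define D where "D = Dsig n \<sigma>"
  have s1: "\<sigma> 1 \<in> {1..n}" using permutes_in_image[OF p] n1 by simp
  have "discr n {\<sigma> 1} (\<sigma> ` {1}) \<le> D" unfolding D_def
    by (rule le_D[OF n1 singleton_interval[of 1 n] singleton_interval]) (use n1 s1 in auto)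
  hence "\<bar>1 - 1 / real n\<bar> \<le> D" unfolding discr_def by simp
  moreover have "1 / real n \<le> 1/2" using a2 assms by simp
  ultimately have Dh: "D \<ge> 1/2" by simp
  define L where "L = real (card {a..b})"
  have Lab: "L = real b - real a + 1" unfolding L_def using assms(3) by simp
  have "sqrt (32 * real n * D) \<le> L" using assms(5) unfolding L_def D_def .
  moreover have "0 \<le> 32 * real n * D" using Dh by simp
  ultimately have L2: "32 * real n * D \<le> L^2"
    by (metis real_sqrt_le_iff real_sqrt_pow2 real_sqrt_unique power2_eq_square sqrt_le_D)
  have Ln: "L \<le> real n" using Lab assms by simp
  have L0: "L \<ge> 0" using Lab assms(3) by simp
  have "L^2 \<le> real n * L" unfolding power2_eq_square using Ln L0 by (rule mult_right_mono)
  hence "32 * real n * D \<le> real n * L" using L2 by linarith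
  hence DL: "D \<le> L / 32" using n1 by (simp add: field_simps)
  have "32 * real n * (1/2) \<le> 32 * real n * D" by (rule mult_left_mono) (use Dh in auto)
  moreover have "real n \<ge> 2" using a2 assms by simp
  ultimately have "L^2 \<ge> 32" using L2 by linarith
  have L5: "L \<ge> 5"
  proof (rule ccontr)
    assume "\<not> L \<ge> 5"
    hence "L^2 \<le> 5^2" using L0 by (intro power_mono) auto
    thus False using \<open>L^2 \<ge> 32\<close> by simp
  qed
  define w where "w = nat (floor ((L - D)/2))"
  define u where "u = nat (floor (real n * (L - D) / (2 * real b)))"
  have b0: "real b > 0" using assms by simp
  have LD0: "L - D \<ge> 0" using DL L5 by simp
  have w1: "real w \<le> (L - D)/2" "real w > (L - D)/2 - 1" unfolding w_def
    using nat_floor_bounds[of "(L - D)/2"] LD0 by auto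
  have "0 \<le> real n * (L - D) / (2 * real b)" using LD0 b0 by simp
  hence u1: "real u \<le> real n * (L - D) / (2 * real b)" "real u > real n * (L - D) / (2 * real b) - 1"
    unfolding u_def using nat_floor_bounds by auto
  have wb: "w \<le> b" using w1 Lab DL Dh by simp
  have "L - D \<le> 2 * real b" using Lab Dh assms(2) by simp
  hence "real n * (L - D) \<le> real n * (2 * real b)" by (rule mult_left_mono) simp
  hence "real n * (L - D) / (2 * real b) \<le> real n" using b0 by (simp add: pos_divide_le_eq)
  hence un: "u \<le> n" using u1 by simp
  define v0 where "v0 = b - w"
  define k0 where "k0 = n - u"
  have rv0: "real v0 = real b - real w" unfolding v0_def using wb by simp
  have rk0: "real k0 = real n - real u" unfolding k0_def using un by simp
  have k0n: "k0 \<le> n" "v0 \<le> n" unfolding k0_def v0_def using assms by auto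
  have ub: "real u * real b \<le> real n * (L - D) / 2" using u1(1) b0 by (simp add: field_simps)
  have "real n * real w \<le> real n * ((L - D) / 2)" using w1(1) by (rule mult_left_mono) simp
  hence nw: "real n * real w \<le> real n * (L - D) / 2" by simp
  have "real k0 * real v0 = real n * real b - real u * real b - real n * real w + real u * real w"
    unfolding rk0 rv0 by (simp add: algebra_simps)
  also have "\<dots> \<ge> real n * (real a - 1 + D)"
  proof -
    have "real n * (real a - 1 + D) = real n * real b - real n * (L - D)"
      by (simp add: Lab algebra_simps)
    moreover have "real u * real w \<ge> 0" by simp
    ultimately show ?thesis using ub nw by linarith
  qed
  finally have key1: "real k0 * real v0 \<ge> real n * (real a - 1 + D)" .
  have "\<bar>real (fc \<sigma> k0 v0) - real k0 * real v0 / real n\<bar> \<le> D"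
    unfolding D_def by (rule disc_fc[OF p k0n n1])
  moreover have "real k0 * real v0 / real n \<ge> real a - 1 + D" using key1 n1
    by (simp add: field_simps)
  ultimately have "real (fc \<sigma> k0 v0) \<ge> real a - 1" by linarith
  hence fa: "fc \<sigma> k0 v0 + 1 \<ge> a" by linarith
  have empty: "\<not> (v0 < \<sigma> q \<and> \<sigma> q \<le> b)" if q: "q \<in> {1..n}" "k0 < q" for q
  proof
    assume r: "v0 < \<sigma> q \<and> \<sigma> q \<le> b"
    have "fc \<sigma> q (\<sigma> q) \<le> fc \<sigma> n b" unfolding fc_def
      by (rule card_mono) (use q r in auto)
    hence hi: "Bsig \<sigma> q \<le> b" using fc_n[OF p assms(4)] bsig_fc by simp
    have "insert q {q' \<in> {1..k0}. \<sigma> q' \<le> v0} \<subseteq> {q' \<in> {1..q}. \<sigma> q' \<le> \<sigma> q}"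
      using q r by auto
    hence "card (insert q {q' \<in> {1..k0}. \<sigma> q' \<le> v0}) \<le> fc \<sigma> q (\<sigma> q)"
      unfolding fc_def by (intro card_mono) auto
    moreover have "card (insert q {q' \<in> {1..k0}. \<sigma> q' \<le> v0}) = fc \<sigma> k0 v0 + 1"
      unfolding fc_def using q by (subst card_insert_disjoint) auto
    ultimately have "a \<le> Bsig \<sigma> q" using fa bsig_fc by simp
    thus False using hi noB[OF q(1)] by simp
  qed
  have split: "{q \<in> {1..k0}. \<sigma> q \<le> b} = {q \<in> {1..k0}. \<sigma> q \<le> v0} \<union> {q \<in> {1..n}. \<sigma> q \<in> {v0<..b}}"
  proof -
    have "q \<le> k0" if "q \<in> {1..n}" "v0 < \<sigma> q" "\<sigma> q \<le> b" for q
      using empty[OF that(1)] that by (meson not_le)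
    moreover have "v0 \<le> b" unfolding v0_def by simp
    ultimately show ?thesis using k0n by auto
  qed
  have cw: "card {q \<in> {1..n}. \<sigma> q \<in> {v0<..b}} = w"
  proof -
    have "{v0<..b} \<subseteq> {1..n}" using assms(4) by auto
    hence c: "card {q \<in> {1..n}. \<sigma> q \<in> {v0<..b}} = card {v0<..b}" by (rule count_perm[OF p])
    have "card {v0<..b} = w" using wb unfolding v0_def by simp
    with c show ?thesis by (rule trans)
  qed
  have "fc \<sigma> k0 b = card {q \<in> {1..k0}. \<sigma> q \<le> v0} + card {q \<in> {1..n}. \<sigma> q \<in> {v0<..b}}"
    unfolding fc_def split by (rule card_Un_disjoint) auto
  hence "fc \<sigma> k0 b = fc \<sigma> k0 v0 + w" unfolding cw fc_def .
  moreover have "\<bar>real (fc \<sigma> k0 b) - real k0 * real b / real n\<bar> \<le> D"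
    unfolding D_def by (rule disc_fc[OF p k0n(1) assms(4) n1])
  moreover have "\<bar>real (fc \<sigma> k0 v0) - real k0 * real v0 / real n\<bar> \<le> D"
    unfolding D_def by (rule disc_fc[OF p k0n n1])
  moreover have "real k0 * real b / real n = real k0 * real v0 / real n + real k0 * real w / real n"
  proof -
    have e: "real k0 * real b = real k0 * real v0 + real k0 * real w" unfolding rv0 by (simp add: algebra_simps)
    show ?thesis by (simp add: e add_divide_distrib)
  qed
  ultimately have "real w \<le> real k0 * real w / real n + 2 * D"
    unfolding abs_le_iff by simp
  hence "real n * real w \<le> real k0 * real w + 2 * D * real n" using n1
    by (simp add: field_simps)
  hence uw: "real u * real w \<le> 2 * real n * D" unfolding rk0 by (simp add: algebra_simps)
  have "real b * (L - D) \<le> real n * (L - D)" using assms(4) LD0 by (intro mult_right_mono) auto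
  hence "real b * (L - D) / (2 * real b) \<le> real n * (L - D) / (2 * real b)"
    by (rule divide_right_mono) simp
  moreover have "real b * (L - D) / (2 * real b) = (L - D) / 2" using b0 by simp
  ultimately have "real n * (L - D) / (2 * real b) \<ge> (L - D) / 2" by simp
  moreover have q0: "(L - D)/2 - 1 \<ge> L/4" using DL L5 by (simp add: field_simps)
  ultimately have q1: "real u > L / 4" using u1(2) by linarith
  have q2: "real w > L / 4" using w1(2) q0 by linarith
  have "real u * real w > (L/4) * (L/4)"
    using q1 q2 L5 by (intro mult_strict_mono) auto
  hence "real u * real w > L^2 / 16" by (simp add: power2_eq_square)
  thus False using uw L2 by linarith
qed

end
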